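(* Every finitely generated multi-ended group is extraterrestrial.
   Context: A finitely generated group $\Gamma$ is multi-ended if for some finite symmetric generating set $S$ there is a finite set $F\subset\Gamma$ such that removing $F$ from the Cayley graph $\mathrm{Cay}(\Gamma,S)$ leaves at least two infinite connected components. A finitely generated group is extraterrestrial if its Cayley graph with respect to some (equivalently any) finite symmetric generating set is extraterrestrial, where a graph $G=(V,E)$ is extraterrestrial if for every $m$ there is $k$ such that for every $r$ there is an $(m,k,r)$-UFO: pairwise disjoint finite $U,F,O\subseteq V$ with $U\neq\emptyset$, $|U|\ge m|F|$, a bijection $\mu:U\to O$ with $d_G(u,\mu(u))\le k$, and every path from $U$ to $O$ either contains a vertex of $F$ or has length at least $r$. *)

theory Defs
  imports "HOL-Algebra.Algebra" "HOL-Library.Extended_Nat"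
begin

definition is_walk :: "'v set \<Rightarrow> ('v \<Rightarrow> 'v \<Rightarrow> bool) \<Rightarrow> 'v list \<Rightarrow> bool" where
  "is_walk V E p \<longleftrightarrow> p \<noteq> [] \<and> set p \<subseteq> V \<and> (\<forall>i. Suc i < length p \<longrightarrow> E (p ! i) (p ! Suc i))"

definition is_path :: "'v set \<Rightarrow> ('v \<Rightarrow> 'v \<Rightarrow> bool) \<Rightarrow> 'v list \<Rightarrow> bool" where
  "is_path V E p \<longleftrightarrow> is_walk V E p \<and> distinct p"

definition walk_length :: "'v list \<Rightarrow> nat" where
  "walk_length p = length p - 1"

text \<open>Graph distance (infinite if no walk exists).\<close>
definition graph_dist :: "'v set \<Rightarrow> ('v \<Rightarrow> 'v \<Rightarrow> bool) \<Rightarrow> 'v \<Rightarrow> 'v \<Rightarrow> enat" where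
  "graph_dist V E u v =
     (INF p \<in> {p. is_walk V E p \<and> hd p = u \<and> last p = v}. enat (walk_length p))"

definition component :: "'v set \<Rightarrow> ('v \<Rightarrow> 'v \<Rightarrow> bool) \<Rightarrow> 'v \<Rightarrow> 'v set" where
  "component V E x = {y. \<exists>p. is_walk V E p \<and> hd p = x \<and> last p = y}"

definition is_UFO :: "'v set \<Rightarrow> ('v \<Rightarrow> 'v \<Rightarrow> bool) \<Rightarrow> nat \<Rightarrow> nat \<Rightarrow> nat
    \<Rightarrow> 'v set \<Rightarrow> 'v set \<Rightarrow> 'v set \<Rightarrow> bool" where
  "is_UFO V E m k r U F Ob \<longleftrightarrow>
     U \<subseteq> V \<and> F \<subseteq> V \<and> Ob \<subseteq> V \<and> finite U \<and> finite F \<and> finite Ob \<and>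
     U \<inter> F = {} \<and> U \<inter> Ob = {} \<and> F \<inter> Ob = {} \<and> U \<noteq> {} \<and>
     card U \<ge> m * card F \<and>
     (\<exists>\<mu>. bij_betw \<mu> U Ob \<and> (\<forall>u\<in>U. graph_dist V E u (\<mu> u) \<le> enat k)) \<and>
     (\<forall>p. is_path V E p \<and> hd p \<in> U \<and> last p \<in> Ob \<longrightarrow>
          set p \<inter> F \<noteq> {} \<or> walk_length p \<ge> r)"

definition extraterrestrial_graph :: "'v set \<Rightarrow> ('v \<Rightarrow> 'v \<Rightarrow> bool) \<Rightarrow> bool" where
  "extraterrestrial_graph V E \<longleftrightarrow>
     (\<forall>m. \<exists>k. \<forall>r. \<exists>U F Ob. is_UFO V E m k r U F Ob)"

definition finite_symm_gen_set :: "('a, 'b) monoid_scheme \<Rightarrow> 'a set \<Rightarrow> bool" where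
  "finite_symm_gen_set G S \<longleftrightarrow>
     finite S \<and> S \<subseteq> carrier G \<and> (\<forall>s\<in>S. inv\<^bsub>G\<^esub> s \<in> S) \<and> generate G S = carrier G"

definition finitely_generated :: "('a, 'b) monoid_scheme \<Rightarrow> bool" where
  "finitely_generated G \<longleftrightarrow> (\<exists>S. finite S \<and> S \<subseteq> carrier G \<and> generate G S = carrier G)"

definition cayley_adj :: "('a, 'b) monoid_scheme \<Rightarrow> 'a set \<Rightarrow> 'a \<Rightarrow> 'a \<Rightarrow> bool" where
  "cayley_adj G S g h \<longleftrightarrow> g \<in> carrier G \<and> (\<exists>s\<in>S. h = g \<otimes>\<^bsub>G\<^esub> s)"

definition multi_ended :: "('a, 'b) monoid_scheme \<Rightarrow> bool" where
  "multi_ended G \<longleftrightarrow>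
     (\<exists>S. finite_symm_gen_set G S \<and>
       (\<exists>F. finite F \<and> F \<subseteq> carrier G \<and>
         (\<exists>x\<in>carrier G - F. \<exists>y\<in>carrier G - F.
            infinite (component (carrier G - F) (cayley_adj G S) x) \<and>
            infinite (component (carrier G - F) (cayley_adj G S) y) \<and>
            component (carrier G - F) (cayley_adj G S) x \<noteq>
            component (carrier G - F) (cayley_adj G S) y)))"

definition extraterrestrial_group :: "('a, 'b) monoid_scheme \<Rightarrow> bool" where
  "extraterrestrial_group G \<longleftrightarrow>
     (\<exists>S. finite_symm_gen_set G S \<and> extraterrestrial_graph (carrier G) (cayley_adj G S))"

end

theory Submission
  imports Defs
begin

lemma walk_Cons:
  "is_walk V E (x # p) \<longleftrightarrow> x \<in> V \<and> (p = [] \<or> (E x (hd p) \<and> is_walk V E p))"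
proof
  assume h: "is_walk V E (x # p)"
  show "x \<in> V \<and> (p = [] \<or> (E x (hd p) \<and> is_walk V E p))"
  proof (cases p)
    case Nil then show ?thesis using h by (simp add: is_walk_def)
  next
    case (Cons a q)
    have "E x a" using h Cons unfolding is_walk_def by (metis length_Cons nth_Cons_0 nth_Cons_Suc zero_less_Suc Suc_less_eq)
    moreover have "is_walk V E p" using h Cons unfolding is_walk_def
      by (metis Suc_less_eq length_Cons list.distinct(1) nth_Cons_Suc set_subset_Cons subset_trans)
    ultimately show ?thesis using h Cons by (simp add: is_walk_def)
  qed
next
  assume h: "x \<in> V \<and> (p = [] \<or> (E x (hd p) \<and> is_walk V E p))"
  show "is_walk V E (x # p)"
  proof (cases p)
    case Nil then show ?thesis using h by (simp add: is_walk_def)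
  next
    case (Cons a q)
    show ?thesis unfolding is_walk_def
    proof (intro conjI allI impI)
      fix i assume "Suc i < length (x # p)"
      then show "E ((x # p) ! i) ((x # p) ! Suc i)" using h Cons
        by (cases i) (auto simp: is_walk_def)
    qed (use h Cons in \<open>auto simp: is_walk_def\<close>)
  qed
qed

lemma walk_single: "x \<in> V \<Longrightarrow> is_walk V E [x]"
  by (simp add: walk_Cons)

lemma walk_append:
  "is_walk V E p \<Longrightarrow> is_walk V E q \<Longrightarrow> last p = hd q \<Longrightarrow> is_walk V E (p @ tl q)"
proof (induction p)
  case Nil then show ?case by (simp add: is_walk_def)
next
  case (Cons a p)
  show ?case
  proof (cases "p = []")
    case True
    then show ?thesis using Cons.prems by (cases q) auto
  next
    case False
    then show ?thesis using Cons by (auto simp: walk_Cons hd_append)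
  qed
qed

lemma walk_append_hd: "p \<noteq> [] \<Longrightarrow> hd (p @ tl q) = hd p" by simp
lemma walk_append_last: "is_walk V E q \<Longrightarrow> last p = hd q \<Longrightarrow> p \<noteq> [] \<Longrightarrow> last (p @ tl q) = last q"
  by (cases q) (auto simp: is_walk_def)

lemma walk_snoc: "is_walk V E (p @ [y]) \<longleftrightarrow> y \<in> V \<and> (p = [] \<or> (E (last p) y \<and> is_walk V E p))"
proof (induction p)
  case Nil then show ?case by (simp add: walk_Cons)
next
  case (Cons a p)
  then show ?case by (cases p) (auto simp: walk_Cons)
qed

lemma walk_rev:
  assumes sym: "\<And>a b. a \<in> V \<Longrightarrow> b \<in> V \<Longrightarrow> E a b \<Longrightarrow> E b a"
  shows "is_walk V E p \<Longrightarrow> is_walk V E (rev p)"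
proof (induction p)
  case Nil then show ?case by (simp add: is_walk_def)
next
  case (Cons a p)
  then show ?case
  proof (cases p)
    case Nil then show ?thesis using Cons by simp
  next
    case (Cons b q)
    have "a \<in> V" "E a b" "is_walk V E p" using Cons.prems Cons by (auto simp: walk_Cons)
    moreover have "b \<in> V" using Cons.prems Cons by (auto simp: walk_Cons)
    ultimately have r: "is_walk V E (rev p)" "E b a" using Cons.IH sym by auto
    have "last (rev p) = b" using Cons by (simp add: last_rev)
    then have "is_walk V E (rev p @ [a])" using r \<open>a \<in> V\<close> by (subst walk_snoc) auto
    then show ?thesis by simp
  qed
qed

lemma comp_reach:
  assumes "z \<in> component V E x" "is_walk V E q" "hd q = z"
  shows "last q \<in> component V E x"
proof -
  obtain p where p: "is_walk V E p" "hd p = x" "last p = z"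
    using assms(1) by (auto simp: component_def)
  have "p \<noteq> []" using p by (simp add: is_walk_def)
  then show ?thesis unfolding component_def
    using walk_append[OF p(1) assms(2)] p assms walk_append_last[OF assms(2)] by auto
qed

lemma comp_eq:
  assumes sym: "\<And>a b. a \<in> V \<Longrightarrow> b \<in> V \<Longrightarrow> E a b \<Longrightarrow> E b a"
    and "z \<in> component V E x" "z \<in> component V E y"
  shows "component V E x \<subseteq> component V E y"
proof
  fix w assume w: "w \<in> component V E x"
  obtain p where p: "is_walk V E p" "hd p = x" "last p = z"
    using assms(2) by (auto simp: component_def)
  obtain q where q: "is_walk V E q" "hd q = x" "last q = w"
    using w by (auto simp: component_def)
  have ne: "p \<noteq> []" using p by (simp add: is_walk_def)
  have "last (rev p) \<in> component V E y"
    using comp_reach[OF assms(3) walk_rev[OF sym p(1)]] p ne by (simp add: hd_rev)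
  then have "x \<in> component V E y" using p ne by (simp add: last_rev)
  then show "w \<in> component V E y" using comp_reach[OF _ q(1)] q by auto
qed

lemma comp_sub: "component V E x \<subseteq> V"
  unfolding component_def is_walk_def by auto

lemma dist_le: "is_walk V E p \<Longrightarrow> hd p = u \<Longrightarrow> last p = v \<Longrightarrow> graph_dist V E u v \<le> enat (walk_length p)"
  unfolding graph_dist_def by (rule INF_lower) auto

lemma gen_walk:
  assumes G: "group G" and S: "S \<subseteq> carrier G" "\<forall>s\<in>S. inv\<^bsub>G\<^esub> s \<in> S"
    and h: "h \<in> generate G S"
  shows "h \<in> carrier G \<and> (\<forall>x\<in>carrier G. \<exists>p. is_walk (carrier G) (cayley_adj G S) p \<and> hd p = x \<and> last p = x \<otimes>\<^bsub>G\<^esub> h)"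
  using h
proof (induction h rule: generate.induct)
  case one
  then show ?case using G by (auto intro!: exI[of _ "[_]"] walk_single simp: group.is_monoid)
next
  case (incl h)
  have hc: "h \<in> carrier G" using incl S by auto
  show ?case
  proof (intro conjI hc ballI)
    fix x assume x: "x \<in> carrier G"
    have "x \<otimes>\<^bsub>G\<^esub> h \<in> carrier G" using G x hc by (simp add: group.is_monoid monoid.m_closed)
    then have "is_walk (carrier G) (cayley_adj G S) [x, x \<otimes>\<^bsub>G\<^esub> h]"
      using x incl by (auto simp: walk_Cons cayley_adj_def)
    then show "\<exists>p. is_walk (carrier G) (cayley_adj G S) p \<and> hd p = x \<and> last p = x \<otimes>\<^bsub>G\<^esub> h" by force
  qed
next
  case (inv h)
  have hc: "inv\<^bsub>G\<^esub> h \<in> carrier G" "inv\<^bsub>G\<^esub> h \<in> S" using inv S by auto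
  show ?case
  proof (intro conjI hc ballI)
    fix x assume x: "x \<in> carrier G"
    have "x \<otimes>\<^bsub>G\<^esub> inv\<^bsub>G\<^esub> h \<in> carrier G" using G x hc by (simp add: group.is_monoid monoid.m_closed)
    then have "is_walk (carrier G) (cayley_adj G S) [x, x \<otimes>\<^bsub>G\<^esub> inv\<^bsub>G\<^esub> h]"
      using x hc by (auto simp: walk_Cons cayley_adj_def)
    then show "\<exists>p. is_walk (carrier G) (cayley_adj G S) p \<and> hd p = x \<and> last p = x \<otimes>\<^bsub>G\<^esub> inv\<^bsub>G\<^esub> h" by force
  qed
next
  case (eng h1 h2)
  have c: "h1 \<otimes>\<^bsub>G\<^esub> h2 \<in> carrier G" using eng G by (simp add: group.is_monoid monoid.m_closed)
  show ?case
  proof (intro conjI c ballI)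
    fix x assume x: "x \<in> carrier G"
    obtain p where p: "is_walk (carrier G) (cayley_adj G S) p" "hd p = x" "last p = x \<otimes>\<^bsub>G\<^esub> h1"
      using eng x by blast
    have x1: "x \<otimes>\<^bsub>G\<^esub> h1 \<in> carrier G" using eng G x by (simp add: group.is_monoid monoid.m_closed)
    obtain q where q: "is_walk (carrier G) (cayley_adj G S) q" "hd q = x \<otimes>\<^bsub>G\<^esub> h1" "last q = x \<otimes>\<^bsub>G\<^esub> h1 \<otimes>\<^bsub>G\<^esub> h2"
      using eng x1 by blast
    have ne: "p \<noteq> []" using p by (simp add: is_walk_def)
    have "x \<otimes>\<^bsub>G\<^esub> h1 \<otimes>\<^bsub>G\<^esub> h2 = x \<otimes>\<^bsub>G\<^esub> (h1 \<otimes>\<^bsub>G\<^esub> h2)"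
      using eng G x by (simp add: group.is_monoid monoid.m_assoc)
    then show "\<exists>p. is_walk (carrier G) (cayley_adj G S) p \<and> hd p = x \<and> last p = x \<otimes>\<^bsub>G\<^esub> (h1 \<otimes>\<^bsub>G\<^esub> h2)"
      using walk_append[OF p(1) q(1)] p q ne walk_append_last[OF q(1)] by (intro exI[of _ "p @ tl q"]) auto
  qed
qed

lemma connected_dist:
  assumes G: "group G" and S: "finite_symm_gen_set G S"
    and u: "u \<in> carrier G" and v: "v \<in> carrier G"
  shows "graph_dist (carrier G) (cayley_adj G S) u v \<noteq> \<infinity>"
proof -
  have h: "inv\<^bsub>G\<^esub> u \<otimes>\<^bsub>G\<^esub> v \<in> generate G S"
    using S G u v by (simp add: finite_symm_gen_set_def group.is_monoid monoid.m_closed group.inv_closed)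
  have "u \<otimes>\<^bsub>G\<^esub> (inv\<^bsub>G\<^esub> u \<otimes>\<^bsub>G\<^esub> v) = v"
    using G u v by (simp add: monoid.m_assoc[symmetric] group.is_monoid group.r_inv monoid.l_one group.inv_closed)
  then obtain p where p: "is_walk (carrier G) (cayley_adj G S) p" "hd p = u" "last p = v"
    using gen_walk[OF G _ _ h] S u unfolding finite_symm_gen_set_def by metis
  have "graph_dist (carrier G) (cayley_adj G S) u v \<le> enat (walk_length p)"
    using dist_le[OF p] .
  then show ?thesis by (metis enat_ord_simps(5) not_infinity_eq)
qed

lemma cayley_sym:
  assumes G: "group G" and S: "finite_symm_gen_set G S"
  shows "\<And>a b. a \<in> V \<Longrightarrow> b \<in> V \<Longrightarrow> V \<subseteq> carrier G \<Longrightarrow> cayley_adj G S a b \<Longrightarrow> cayley_adj G S b a"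
proof -
  fix a b assume ab: "a \<in> V" "b \<in> V" "V \<subseteq> carrier G" "cayley_adj G S a b"
  then obtain s where s: "s \<in> S" "b = a \<otimes>\<^bsub>G\<^esub> s" by (auto simp: cayley_adj_def)
  have sc: "s \<in> carrier G" "inv\<^bsub>G\<^esub> s \<in> S" using S s by (auto simp: finite_symm_gen_set_def)
  have "b \<otimes>\<^bsub>G\<^esub> inv\<^bsub>G\<^esub> s = a" using s sc ab G
    by (auto simp: monoid.m_assoc group.is_monoid group.r_inv monoid.r_one group.inv_closed)
  then show "cayley_adj G S b a" using ab sc unfolding cayley_adj_def by force
qed

theorem mainTheorem6:
  fixes G :: "('a, 'b) monoid_scheme"
  assumes "group G"
    and "finitely_generated G"
    and "multi_ended G"
  shows "extraterrestrial_group G"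
proof -
  note G = assms(1)
  obtain S F x y where S: "finite_symm_gen_set G S" and F: "finite F" "F \<subseteq> carrier G"
    and x: "x \<in> carrier G - F" and y: "y \<in> carrier G - F"
    and ix: "infinite (component (carrier G - F) (cayley_adj G S) x)"
    and iy: "infinite (component (carrier G - F) (cayley_adj G S) y)"
    and ne: "component (carrier G - F) (cayley_adj G S) x \<noteq> component (carrier G - F) (cayley_adj G S) y"
    using assms(3) unfolding multi_ended_def by blast
  define V where "V = carrier G - F"
  define E where "E = cayley_adj G S"
  define Cx where "Cx = component V E x"
  define Cy where "Cy = component V E y"
  have sym: "\<And>a b. a \<in> V \<Longrightarrow> b \<in> V \<Longrightarrow> E a b \<Longrightarrow> E b a"
    using cayley_sym[OF G S] unfolding E_def V_def by blast
  have disj: "Cx \<inter> Cy = {}"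
  proof (rule ccontr)
    assume "Cx \<inter> Cy \<noteq> {}"
    then obtain z where "z \<in> Cx" "z \<in> Cy" by blast
    then have "Cx = Cy" unfolding Cx_def Cy_def using comp_eq[OF sym, where z=z and x=x and y=y] comp_eq[OF sym, where z=z and x=y and y=x] by (intro equalityI) simp_all
    then show False using ne unfolding Cx_def Cy_def V_def E_def by simp
  qed
  have ix': "infinite Cx" using ix unfolding Cx_def V_def E_def .
  have iy': "infinite Cy" using iy unfolding Cy_def V_def E_def .
  have CxV: "Cx \<subseteq> V" "Cy \<subseteq> V" unfolding Cx_def Cy_def by (rule comp_sub)+
  show ?thesis unfolding extraterrestrial_group_def extraterrestrial_graph_def
  proof (intro exI[of _ S] conjI S allI)
    fix m
    obtain U where "finite U \<and> card U = m * card F + 1 \<and> U \<subseteq> Cx"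
      using infinite_arbitrarily_large[OF ix', of "m * card F + 1"] by (elim exE) (rule that)
    then have U: "U \<subseteq> Cx" "finite U" "card U = m * card F + 1" by auto
    obtain Ob where "finite Ob \<and> card Ob = m * card F + 1 \<and> Ob \<subseteq> Cy"
      using infinite_arbitrarily_large[OF iy', of "m * card F + 1"] by (elim exE) (rule that)
    then have Ob: "Ob \<subseteq> Cy" "finite Ob" "card Ob = m * card F + 1" by auto
    obtain \<mu> where mu: "bij_betw \<mu> U Ob"
      using U Ob by (metis finite_same_card_bij)
    define d where "d u = the_enat (graph_dist (carrier G) E u (\<mu> u))" for u
    define k where "k = (\<Sum>u\<in>U. d u)"
    have dk: "graph_dist (carrier G) E u (\<mu> u) \<le> enat k" if u: "u \<in> U" for u
    proof -
      have "u \<in> carrier G" "\<mu> u \<in> carrier G"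
        using u U Ob CxV bij_betwE[OF mu] unfolding V_def by blast+
      then have "graph_dist (carrier G) E u (\<mu> u) = enat (d u)"
        using connected_dist[OF G S] unfolding d_def E_def by (metis the_enat.simps not_infinity_eq)
      moreover have "d u \<le> k" unfolding k_def using U u by (intro member_le_sum) auto
      ultimately show ?thesis by simp
    qed
    show "\<exists>k. \<forall>r. \<exists>U F Ob. is_UFO (carrier G) (cayley_adj G S) m k r U F Ob"
    proof (intro exI allI)
      fix r
      show "is_UFO (carrier G) (cayley_adj G S) m k r U F Ob"
        unfolding is_UFO_def
      proof (intro conjI)
        show "U \<subseteq> carrier G" "Ob \<subseteq> carrier G" "U \<inter> F = {}" "F \<inter> Ob = {}"
          using U Ob CxV unfolding V_def by auto
        show "U \<inter> Ob = {}" using U Ob disj by auto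
        show "\<exists>\<mu>. bij_betw \<mu> U Ob \<and> (\<forall>u\<in>U. graph_dist (carrier G) (cayley_adj G S) u (\<mu> u) \<le> enat k)"
          using mu dk unfolding E_def by blast
        show "U \<noteq> {}" using U(3) by (metis card.empty add_is_0 one_neq_zero)
        show "m * card F \<le> card U" using U(3) by simp
        show "\<forall>p. is_path (carrier G) (cayley_adj G S) p \<and> hd p \<in> U \<and> last p \<in> Ob \<longrightarrow>
          set p \<inter> F \<noteq> {} \<or> r \<le> walk_length p"
        proof (intro allI impI)
          fix p assume p: "is_path (carrier G) (cayley_adj G S) p \<and> hd p \<in> U \<and> last p \<in> Ob"
          show "set p \<inter> F \<noteq> {} \<or> r \<le> walk_length p"
          proof (rule ccontr)
            assume "\<not> ?thesis"
            then have "set p \<inter> F = {}" by blast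
            then have w: "is_walk V E p" using p unfolding is_path_def is_walk_def V_def E_def by auto
            have "last p \<in> Cx" using comp_reach[OF _ w] p U unfolding Cx_def by blast
            then show False using p Ob disj by auto
          qed
        qed
      qed (use U(2) Ob(2) F in simp_all)
    qed
  qed
qed

end
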